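(* Let $\mathcal{C}$ be a category with finite coproducts. The semifree functor $(-)^{\mathrm{s}}:\mathbf{Mon}(\mathcal{C})\to\mathbf{Mon}(\mathcal{C})$ together with the transformations $\epsilon$ and $\delta$ defined, for a monad $(M,\eta,\mu)$ and object $X$, by $\epsilon_{M,X}=[\eta_X,\mathrm{id}_{MX}]:X+MX\to MX$ and $\delta_{M,X}=\mathrm{id}_X+\mathrm{inr}^{X+MX}:X+MX\to X+(X+MX)$, is a comonad on $\mathbf{Mon}(\mathcal{C})$.
   Context: $\mathbf{Mon}(\mathcal{C})$ is the category of monads on $\mathcal{C}$ and monad morphisms. For a monad $(M,\eta,\mu)$, the semifree monad is $M^{\mathrm{s}}=\mathrm{Id}+M$ with unit $\eta^{\mathrm{s}}=\mathrm{inl}$ and multiplication $\mu^{\mathrm{s}}=[\mathrm{id}_{\mathrm{Id}+M},\ \mathrm{inr}\circ\mu\circ M[\eta,\mathrm{id}_M]]$; on a monad morphism $\sigma:M\Rightarrow T$, $(\sigma^{\mathrm{s}})_X=\mathrm{id}_X+\sigma_X$. Note $(M^{\mathrm{s}})^{\mathrm{s}}X=X+(X+MX)$. *)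

theory Defs
  imports Main
begin

text \<open>A category with chosen binary coproducts. Objects have type 'o, arrows type 'a;
  the carriers are the sets Ob and Ar. cmp C g f is the composite g after f.\<close>

record ('o,'a) cocat =
  Ob :: "'o set"
  Ar :: "'a set"
  dom :: "'a \<Rightarrow> 'o"
  cod :: "'a \<Rightarrow> 'o"
  cmp :: "'a \<Rightarrow> 'a \<Rightarrow> 'a"
  idt :: "'o \<Rightarrow> 'a"
  cp :: "'o \<Rightarrow> 'o \<Rightarrow> 'o"
  inl :: "'o \<Rightarrow> 'o \<Rightarrow> 'a"
  inr :: "'o \<Rightarrow> 'o \<Rightarrow> 'a"
  copair :: "'a \<Rightarrow> 'a \<Rightarrow> 'a"

definition hom :: "('o,'a) cocat \<Rightarrow> 'o \<Rightarrow> 'o \<Rightarrow> 'a set" where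
  "hom C X Y = {f \<in> Ar C. dom C f = X \<and> cod C f = Y}"

definition category :: "('o,'a) cocat \<Rightarrow> bool" where
  "category C \<longleftrightarrow>
     (\<forall>f\<in>Ar C. dom C f \<in> Ob C \<and> cod C f \<in> Ob C) \<and>
     (\<forall>X\<in>Ob C. idt C X \<in> hom C X X) \<and>
     (\<forall>f\<in>Ar C. \<forall>g\<in>Ar C. cod C f = dom C g \<longrightarrow> cmp C g f \<in> hom C (dom C f) (cod C g)) \<and>
     (\<forall>f\<in>Ar C. cmp C (idt C (cod C f)) f = f \<and> cmp C f (idt C (dom C f)) = f) \<and>
     (\<forall>f\<in>Ar C. \<forall>g\<in>Ar C. \<forall>h\<in>Ar C. cod C f = dom C g \<longrightarrow> cod C g = dom C h \<longrightarrow>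
        cmp C h (cmp C g f) = cmp C (cmp C h g) f)"

definition has_finite_coproducts :: "('o,'a) cocat \<Rightarrow> bool" where
  "has_finite_coproducts C \<longleftrightarrow>
     (\<exists>I\<in>Ob C. \<forall>Z\<in>Ob C. \<exists>!h. h \<in> hom C I Z) \<and>
     (\<forall>X\<in>Ob C. \<forall>Y\<in>Ob C.
        cp C X Y \<in> Ob C \<and> inl C X Y \<in> hom C X (cp C X Y) \<and> inr C X Y \<in> hom C Y (cp C X Y) \<and>
        (\<forall>Z\<in>Ob C. \<forall>f\<in>hom C X Z. \<forall>g\<in>hom C Y Z.
           copair C f g \<in> hom C (cp C X Y) Z \<and>
           cmp C (copair C f g) (inl C X Y) = f \<and> cmp C (copair C f g) (inr C X Y) = g \<and>
           (\<forall>h\<in>hom C (cp C X Y) Z. cmp C h (inl C X Y) = f \<and> cmp C h (inr C X Y) = g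
               \<longrightarrow> h = copair C f g)))"

definition asum :: "('o,'a) cocat \<Rightarrow> 'a \<Rightarrow> 'a \<Rightarrow> 'a" where
  "asum C f g = copair C (cmp C (inl C (cod C f) (cod C g)) f) (cmp C (inr C (cod C f) (cod C g)) g)"

definition endofunctor :: "('o,'a) cocat \<Rightarrow> ('o \<Rightarrow> 'o) \<Rightarrow> ('a \<Rightarrow> 'a) \<Rightarrow> bool" where
  "endofunctor C Fo Fa \<longleftrightarrow>
     (\<forall>X\<in>Ob C. Fo X \<in> Ob C) \<and>
     (\<forall>f\<in>Ar C. Fa f \<in> hom C (Fo (dom C f)) (Fo (cod C f))) \<and>
     (\<forall>X\<in>Ob C. Fa (idt C X) = idt C (Fo X)) \<and>
     (\<forall>f\<in>Ar C. \<forall>g\<in>Ar C. cod C f = dom C g \<longrightarrow> Fa (cmp C g f) = cmp C (Fa g) (Fa f))"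

definition nat_trans :: "('o,'a) cocat \<Rightarrow> ('o \<Rightarrow> 'o) \<Rightarrow> ('a \<Rightarrow> 'a) \<Rightarrow> ('o \<Rightarrow> 'o) \<Rightarrow> ('a \<Rightarrow> 'a)
    \<Rightarrow> ('o \<Rightarrow> 'a) \<Rightarrow> bool" where
  "nat_trans C Fo Fa Go Ga \<alpha> \<longleftrightarrow>
     (\<forall>X\<in>Ob C. \<alpha> X \<in> hom C (Fo X) (Go X)) \<and>
     (\<forall>f\<in>Ar C. cmp C (\<alpha> (cod C f)) (Fa f) = cmp C (Ga f) (\<alpha> (dom C f)))"

record ('o,'a) mnd =
  Mo :: "'o \<Rightarrow> 'o"
  Ma :: "'a \<Rightarrow> 'a"
  unit :: "'o \<Rightarrow> 'a"
  mult :: "'o \<Rightarrow> 'a"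

definition is_monad :: "('o,'a) cocat \<Rightarrow> ('o,'a) mnd \<Rightarrow> bool" where
  "is_monad C M \<longleftrightarrow>
     endofunctor C (Mo M) (Ma M) \<and>
     nat_trans C id id (Mo M) (Ma M) (unit M) \<and>
     nat_trans C (Mo M \<circ> Mo M) (Ma M \<circ> Ma M) (Mo M) (Ma M) (mult M) \<and>
     (\<forall>X\<in>Ob C. cmp C (mult M X) (unit M (Mo M X)) = idt C (Mo M X)) \<and>
     (\<forall>X\<in>Ob C. cmp C (mult M X) (Ma M (unit M X)) = idt C (Mo M X)) \<and>
     (\<forall>X\<in>Ob C. cmp C (mult M X) (mult M (Mo M X)) = cmp C (mult M X) (Ma M (mult M X)))"

definition monad_mor :: "('o,'a) cocat \<Rightarrow> ('o,'a) mnd \<Rightarrow> ('o,'a) mnd \<Rightarrow> ('o \<Rightarrow> 'a) \<Rightarrow> bool" where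
  "monad_mor C M T \<sigma> \<longleftrightarrow>
     nat_trans C (Mo M) (Ma M) (Mo T) (Ma T) \<sigma> \<and>
     (\<forall>X\<in>Ob C. cmp C (\<sigma> X) (unit M X) = unit T X) \<and>
     (\<forall>X\<in>Ob C. cmp C (\<sigma> X) (mult M X) =
                 cmp C (mult T X) (cmp C (Ma T (\<sigma> X)) (\<sigma> (Mo M X))))"

definition mon_id :: "('o,'a) cocat \<Rightarrow> ('o,'a) mnd \<Rightarrow> 'o \<Rightarrow> 'a" where
  "mon_id C M = (\<lambda>X. idt C (Mo M X))"

definition mon_comp :: "('o,'a) cocat \<Rightarrow> ('o \<Rightarrow> 'a) \<Rightarrow> ('o \<Rightarrow> 'a) \<Rightarrow> 'o \<Rightarrow> 'a" where
  "mon_comp C \<tau> \<sigma> = (\<lambda>X. cmp C (\<tau> X) (\<sigma> X))"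

definition mor_eq :: "('o,'a) cocat \<Rightarrow> ('o \<Rightarrow> 'a) \<Rightarrow> ('o \<Rightarrow> 'a) \<Rightarrow> bool" where
  "mor_eq C \<sigma> \<tau> \<longleftrightarrow> (\<forall>X\<in>Ob C. \<sigma> X = \<tau> X)"

definition mon_endofunctor :: "('o,'a) cocat \<Rightarrow> (('o,'a) mnd \<Rightarrow> ('o,'a) mnd)
    \<Rightarrow> (('o \<Rightarrow> 'a) \<Rightarrow> ('o \<Rightarrow> 'a)) \<Rightarrow> bool" where
  "mon_endofunctor C F Fm \<longleftrightarrow>
     (\<forall>M. is_monad C M \<longrightarrow> is_monad C (F M)) \<and>
     (\<forall>M T \<sigma>. is_monad C M \<longrightarrow> is_monad C T \<longrightarrow> monad_mor C M T \<sigma> \<longrightarrow>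
        monad_mor C (F M) (F T) (Fm \<sigma>)) \<and>
     (\<forall>M. is_monad C M \<longrightarrow> mor_eq C (Fm (mon_id C M)) (mon_id C (F M))) \<and>
     (\<forall>M T U \<sigma> \<tau>. is_monad C M \<longrightarrow> is_monad C T \<longrightarrow> is_monad C U \<longrightarrow>
        monad_mor C M T \<sigma> \<longrightarrow> monad_mor C T U \<tau> \<longrightarrow>
        mor_eq C (Fm (mon_comp C \<tau> \<sigma>)) (mon_comp C (Fm \<tau>) (Fm \<sigma>)))"

definition mon_comonad :: "('o,'a) cocat \<Rightarrow> (('o,'a) mnd \<Rightarrow> ('o,'a) mnd)
    \<Rightarrow> (('o \<Rightarrow> 'a) \<Rightarrow> ('o \<Rightarrow> 'a)) \<Rightarrow> (('o,'a) mnd \<Rightarrow> 'o \<Rightarrow> 'a) \<Rightarrow> (('o,'a) mnd \<Rightarrow> 'o \<Rightarrow> 'a) \<Rightarrow> bool" where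
  "mon_comonad C F Fm \<epsilon> \<delta> \<longleftrightarrow>
     mon_endofunctor C F Fm \<and>
     (\<forall>M. is_monad C M \<longrightarrow> monad_mor C (F M) M (\<epsilon> M) \<and> monad_mor C (F M) (F (F M)) (\<delta> M)) \<and>
     (\<forall>M T \<sigma>. is_monad C M \<longrightarrow> is_monad C T \<longrightarrow> monad_mor C M T \<sigma> \<longrightarrow>
        mor_eq C (mon_comp C \<sigma> (\<epsilon> M)) (mon_comp C (\<epsilon> T) (Fm \<sigma>)) \<and>
        mor_eq C (mon_comp C (Fm (Fm \<sigma>)) (\<delta> M)) (mon_comp C (\<delta> T) (Fm \<sigma>))) \<and>
     (\<forall>M. is_monad C M \<longrightarrow>
        mor_eq C (mon_comp C (\<epsilon> (F M)) (\<delta> M)) (mon_id C (F M)) \<and>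
        mor_eq C (mon_comp C (Fm (\<epsilon> M)) (\<delta> M)) (mon_id C (F M)) \<and>
        mor_eq C (mon_comp C (\<delta> (F M)) (\<delta> M)) (mon_comp C (Fm (\<delta> M)) (\<delta> M)))"

definition semifree :: "('o,'a) cocat \<Rightarrow> ('o,'a) mnd \<Rightarrow> ('o,'a) mnd" where
  "semifree C M =
     \<lparr> Mo = (\<lambda>X. cp C X (Mo M X)),
       Ma = (\<lambda>f. asum C f (Ma M f)),
       unit = (\<lambda>X. inl C X (Mo M X)),
       mult = (\<lambda>X. copair C (idt C (cp C X (Mo M X)))
                  (cmp C (inr C X (Mo M X))
                     (cmp C (mult M X) (Ma M (copair C (unit M X) (idt C (Mo M X))))))) \<rparr>"

definition semifree_mor :: "('o,'a) cocat \<Rightarrow> ('o \<Rightarrow> 'a) \<Rightarrow> 'o \<Rightarrow> 'a" where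
  "semifree_mor C \<sigma> = (\<lambda>X. asum C (idt C X) (\<sigma> X))"

definition sf_eps :: "('o,'a) cocat \<Rightarrow> ('o,'a) mnd \<Rightarrow> 'o \<Rightarrow> 'a" where
  "sf_eps C M = (\<lambda>X. copair C (unit M X) (idt C (Mo M X)))"

definition sf_delta :: "('o,'a) cocat \<Rightarrow> ('o,'a) mnd \<Rightarrow> 'o \<Rightarrow> 'a" where
  "sf_delta C M = (\<lambda>X. asum C (idt C X) (inr C X (Mo M X)))"

end

theory Submission
  imports Defs
begin


locale cc =
  fixes C :: "('o,'a) cocat"
  assumes cat: "category C" and cop: "has_finite_coproducts C"
begin

lemma ar_dom[simp]: "f \<in> Ar C \<Longrightarrow> dom C f \<in> Ob C"
  and ar_cod[simp]: "f \<in> Ar C \<Longrightarrow> cod C f \<in> Ob C"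
  using cat unfolding category_def by auto

lemma idt_ar[simp]: "X \<in> Ob C \<Longrightarrow> idt C X \<in> Ar C"
  and dom_idt[simp]: "X \<in> Ob C \<Longrightarrow> dom C (idt C X) = X"
  and cod_idt[simp]: "X \<in> Ob C \<Longrightarrow> cod C (idt C X) = X"
  using cat unfolding category_def hom_def by auto

lemma cmp_ar[simp]: "\<lbrakk>f \<in> Ar C; g \<in> Ar C; cod C f = dom C g\<rbrakk> \<Longrightarrow> cmp C g f \<in> Ar C"
  and dom_cmp[simp]: "\<lbrakk>f \<in> Ar C; g \<in> Ar C; cod C f = dom C g\<rbrakk> \<Longrightarrow> dom C (cmp C g f) = dom C f"
  and cod_cmp[simp]: "\<lbrakk>f \<in> Ar C; g \<in> Ar C; cod C f = dom C g\<rbrakk> \<Longrightarrow> cod C (cmp C g f) = cod C g"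
  using cat unfolding category_def hom_def by auto

lemma cmp_assoc[simp]: "\<lbrakk>f \<in> Ar C; g \<in> Ar C; h \<in> Ar C; cod C f = dom C g; cod C g = dom C h\<rbrakk>
   \<Longrightarrow> cmp C (cmp C h g) f = cmp C h (cmp C g f)"
  using cat unfolding category_def by metis

lemma id_l[simp]: "\<lbrakk>f \<in> Ar C; cod C f = Y\<rbrakk> \<Longrightarrow> cmp C (idt C Y) f = f"
  and id_r[simp]: "\<lbrakk>f \<in> Ar C; dom C f = Y\<rbrakk> \<Longrightarrow> cmp C f (idt C Y) = f"
  using cat unfolding category_def by auto

lemma copD: "X \<in> Ob C \<Longrightarrow> Y \<in> Ob C \<Longrightarrow>
        cp C X Y \<in> Ob C \<and> inl C X Y \<in> hom C X (cp C X Y) \<and> inr C X Y \<in> hom C Y (cp C X Y) \<and>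
        (\<forall>Z\<in>Ob C. \<forall>f\<in>hom C X Z. \<forall>g\<in>hom C Y Z.
           copair C f g \<in> hom C (cp C X Y) Z \<and>
           cmp C (copair C f g) (inl C X Y) = f \<and> cmp C (copair C f g) (inr C X Y) = g \<and>
           (\<forall>h\<in>hom C (cp C X Y) Z. cmp C h (inl C X Y) = f \<and> cmp C h (inr C X Y) = g
               \<longrightarrow> h = copair C f g))"
  using cop unfolding has_finite_coproducts_def by blast

lemma cp_ob[simp]: "X \<in> Ob C \<Longrightarrow> Y \<in> Ob C \<Longrightarrow> cp C X Y \<in> Ob C"
  using copD by blast

lemma inl_ar[simp]: "X \<in> Ob C \<Longrightarrow> Y \<in> Ob C \<Longrightarrow> inl C X Y \<in> Ar C"
  and dom_inl[simp]: "X \<in> Ob C \<Longrightarrow> Y \<in> Ob C \<Longrightarrow> dom C (inl C X Y) = X"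
  and cod_inl[simp]: "X \<in> Ob C \<Longrightarrow> Y \<in> Ob C \<Longrightarrow> cod C (inl C X Y) = cp C X Y"
  and inr_ar[simp]: "X \<in> Ob C \<Longrightarrow> Y \<in> Ob C \<Longrightarrow> inr C X Y \<in> Ar C"
  and dom_inr[simp]: "X \<in> Ob C \<Longrightarrow> Y \<in> Ob C \<Longrightarrow> dom C (inr C X Y) = Y"
  and cod_inr[simp]: "X \<in> Ob C \<Longrightarrow> Y \<in> Ob C \<Longrightarrow> cod C (inr C X Y) = cp C X Y"
  using copD unfolding hom_def by blast+

lemma copair_facts:
  assumes "f \<in> Ar C" "g \<in> Ar C" "cod C f = cod C g"
  shows "copair C f g \<in> Ar C \<and> dom C (copair C f g) = cp C (dom C f) (dom C g)
    \<and> cod C (copair C f g) = cod C f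
    \<and> cmp C (copair C f g) (inl C (dom C f) (dom C g)) = f
    \<and> cmp C (copair C f g) (inr C (dom C f) (dom C g)) = g"
proof -
  have "f \<in> hom C (dom C f) (cod C f)" "g \<in> hom C (dom C g) (cod C f)"
    using assms unfolding hom_def by auto
  moreover have "dom C f \<in> Ob C" "dom C g \<in> Ob C" "cod C f \<in> Ob C" using assms by auto
  ultimately have "copair C f g \<in> hom C (cp C (dom C f) (dom C g)) (cod C f) \<and>
     cmp C (copair C f g) (inl C (dom C f) (dom C g)) = f \<and> cmp C (copair C f g) (inr C (dom C f) (dom C g)) = g"
    using copD[of "dom C f" "dom C g"] by blast
  then show ?thesis unfolding hom_def by auto
qed

lemma copair_ar[simp]: "\<lbrakk>f \<in> Ar C; g \<in> Ar C; cod C f = cod C g\<rbrakk> \<Longrightarrow> copair C f g \<in> Ar C"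
  and dom_copair[simp]: "\<lbrakk>f \<in> Ar C; g \<in> Ar C; cod C f = cod C g\<rbrakk> \<Longrightarrow> dom C (copair C f g) = cp C (dom C f) (dom C g)"
  and cod_copair[simp]: "\<lbrakk>f \<in> Ar C; g \<in> Ar C; cod C f = cod C g\<rbrakk> \<Longrightarrow> cod C (copair C f g) = cod C f"
  using copair_facts by blast+

lemma copair_inl[simp]: "\<lbrakk>f \<in> Ar C; g \<in> Ar C; cod C f = cod C g; dom C f = X; dom C g = Y\<rbrakk>
   \<Longrightarrow> cmp C (copair C f g) (inl C X Y) = f"
  and copair_inr[simp]: "\<lbrakk>f \<in> Ar C; g \<in> Ar C; cod C f = cod C g; dom C f = X; dom C g = Y\<rbrakk>
   \<Longrightarrow> cmp C (copair C f g) (inr C X Y) = g"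
  using copair_facts by blast+

lemma copair_inl'[simp]: "\<lbrakk>f \<in> Ar C; g \<in> Ar C; cod C f = cod C g; dom C f = X; dom C g = Y; k \<in> Ar C; cod C k = X\<rbrakk>
   \<Longrightarrow> cmp C (copair C f g) (cmp C (inl C X Y) k) = cmp C f k"
proof -
  assume a: "f \<in> Ar C" "g \<in> Ar C" "cod C f = cod C g" "dom C f = X" "dom C g = Y" "k \<in> Ar C" "cod C k = X"
  then have "cmp C (copair C f g) (cmp C (inl C X Y) k) = cmp C (cmp C (copair C f g) (inl C X Y)) k"
    by (subst cmp_assoc) auto
  then show ?thesis using a by simp
qed

lemma copair_inr'[simp]: "\<lbrakk>f \<in> Ar C; g \<in> Ar C; cod C f = cod C g; dom C f = X; dom C g = Y; k \<in> Ar C; cod C k = Y\<rbrakk>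
   \<Longrightarrow> cmp C (copair C f g) (cmp C (inr C X Y) k) = cmp C g k"
proof -
  assume a: "f \<in> Ar C" "g \<in> Ar C" "cod C f = cod C g" "dom C f = X" "dom C g = Y" "k \<in> Ar C" "cod C k = Y"
  then have "cmp C (copair C f g) (cmp C (inr C X Y) k) = cmp C (cmp C (copair C f g) (inr C X Y)) k"
    by (subst cmp_assoc) auto
  then show ?thesis using a by simp
qed

lemma cp_ext:
  assumes "h \<in> Ar C" "h' \<in> Ar C" "dom C h = cp C X Y" "dom C h' = cp C X Y" "cod C h = cod C h'"
    "X \<in> Ob C" "Y \<in> Ob C"
    "cmp C h (inl C X Y) = cmp C h' (inl C X Y)" "cmp C h (inr C X Y) = cmp C h' (inr C X Y)"
  shows "h = h'"
proof -
  let ?f = "cmp C h (inl C X Y)" and ?g = "cmp C h (inr C X Y)" and ?Z = "cod C h"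
  have f: "?f \<in> hom C X ?Z" and g: "?g \<in> hom C Y ?Z" using assms unfolding hom_def by auto
  have "h \<in> hom C (cp C X Y) ?Z" "h' \<in> hom C (cp C X Y) ?Z" using assms unfolding hom_def by auto
  then show ?thesis using copD[OF assms(6,7)] f g assms(8,9) assms(1) ar_cod by metis
qed

lemma copair_inl_inr[simp]: "X \<in> Ob C \<Longrightarrow> Y \<in> Ob C \<Longrightarrow> copair C (inl C X Y) (inr C X Y) = idt C (cp C X Y)"
  by (rule cp_ext[of _ _ X Y]) auto

lemma cmp_copair[simp]:
  assumes a: "f \<in> Ar C" "g \<in> Ar C" "cod C f = cod C g" "h \<in> Ar C" "dom C h = cod C f"
  shows "cmp C h (copair C f g) = copair C (cmp C h f) (cmp C h g)"
proof (rule cp_ext[of _ _ "dom C f" "dom C g"])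
  show "cmp C (cmp C h (copair C f g)) (inl C (dom C f) (dom C g)) = cmp C (copair C (cmp C h f) (cmp C h g)) (inl C (dom C f) (dom C g))"
    using a by (subst cmp_assoc) auto
  show "cmp C (cmp C h (copair C f g)) (inr C (dom C f) (dom C g)) = cmp C (copair C (cmp C h f) (cmp C h g)) (inr C (dom C f) (dom C g))"
    using a by (subst cmp_assoc) auto
qed (use a in auto)

lemma cmp_copair'[simp]: "\<lbrakk>f \<in> Ar C; g \<in> Ar C; cod C f = cod C g; h \<in> Ar C; dom C h = cod C f;
   k \<in> Ar C; cod C k = cp C (dom C f) (dom C g)\<rbrakk>
   \<Longrightarrow> cmp C h (cmp C (copair C f g) k) = cmp C (copair C (cmp C h f) (cmp C h g)) k"
  by (simp del: cmp_copair add: cmp_copair[symmetric])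

end


context cc begin

lemma kvar: "\<lbrakk>cmp C a b = cmp C c d; a \<in> Ar C; b \<in> Ar C; c \<in> Ar C; d \<in> Ar C; k \<in> Ar C;
   cod C b = dom C a; cod C d = dom C c; cod C k = dom C b; dom C d = dom C b\<rbrakk>
  \<Longrightarrow> cmp C a (cmp C b k) = cmp C c (cmp C d k)"
  by (metis cmp_assoc)

lemma asum_simp[simp]: "asum C f g = copair C (cmp C (inl C (cod C f) (cod C g)) f) (cmp C (inr C (cod C f) (cod C g)) g)"
  by (simp add: asum_def)

context fixes M assumes mM: "is_monad C M"
begin

lemma mo_ob[simp]: "X \<in> Ob C \<Longrightarrow> Mo M X \<in> Ob C"
  and ma_ar[simp]: "f \<in> Ar C \<Longrightarrow> Ma M f \<in> Ar C"
  and dom_ma[simp]: "f \<in> Ar C \<Longrightarrow> dom C (Ma M f) = Mo M (dom C f)"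
  and cod_ma[simp]: "f \<in> Ar C \<Longrightarrow> cod C (Ma M f) = Mo M (cod C f)"
  and ma_id[simp]: "X \<in> Ob C \<Longrightarrow> Ma M (idt C X) = idt C (Mo M X)"
  and ma_cmp[simp]: "\<lbrakk>f \<in> Ar C; g \<in> Ar C; cod C f = dom C g\<rbrakk> \<Longrightarrow> Ma M (cmp C g f) = cmp C (Ma M g) (Ma M f)"
  using mM unfolding is_monad_def endofunctor_def hom_def by auto

lemma unit_ar[simp]: "X \<in> Ob C \<Longrightarrow> unit M X \<in> Ar C"
  and dom_unit[simp]: "X \<in> Ob C \<Longrightarrow> dom C (unit M X) = X"
  and cod_unit[simp]: "X \<in> Ob C \<Longrightarrow> cod C (unit M X) = Mo M X"
  and mult_ar[simp]: "X \<in> Ob C \<Longrightarrow> mult M X \<in> Ar C"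
  and dom_mult[simp]: "X \<in> Ob C \<Longrightarrow> dom C (mult M X) = Mo M (Mo M X)"
  and cod_mult[simp]: "X \<in> Ob C \<Longrightarrow> cod C (mult M X) = Mo M X"
  using mM unfolding is_monad_def nat_trans_def hom_def by auto

lemma unit_nat: "f \<in> Ar C \<Longrightarrow> cmp C (unit M (cod C f)) f = cmp C (Ma M f) (unit M (dom C f))"
  and mult_nat: "f \<in> Ar C \<Longrightarrow> cmp C (mult M (cod C f)) (Ma M (Ma M f)) = cmp C (Ma M f) (mult M (dom C f))"
  and mult_unit[simp]: "X \<in> Ob C \<Longrightarrow> cmp C (mult M X) (unit M (Mo M X)) = idt C (Mo M X)"
  and mult_Munit[simp]: "X \<in> Ob C \<Longrightarrow> cmp C (mult M X) (Ma M (unit M X)) = idt C (Mo M X)"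
  and mult_assoc: "X \<in> Ob C \<Longrightarrow> cmp C (mult M X) (mult M (Mo M X)) = cmp C (mult M X) (Ma M (mult M X))"
  using mM unfolding is_monad_def nat_trans_def by auto

lemma unit_nat': "f \<in> Ar C \<Longrightarrow> dom C f = X \<Longrightarrow> cod C f = Y \<Longrightarrow> cmp C (Ma M f) (unit M X) = cmp C (unit M Y) f"
  using unit_nat by metis

lemma mult_nat': "f \<in> Ar C \<Longrightarrow> dom C f = X \<Longrightarrow> cod C f = Y \<Longrightarrow> k \<in> Ar C \<Longrightarrow> cod C k = Mo M (Mo M X) \<Longrightarrow>
   cmp C (mult M Y) (cmp C (Ma M (Ma M f)) k) = cmp C (Ma M f) (cmp C (mult M X) k)"
  by (subst (1 2) cmp_assoc[symmetric]) (auto simp: mult_nat)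

lemma mult_nat_rev: "f \<in> Ar C \<Longrightarrow> dom C f = X \<Longrightarrow> cod C f = Y \<Longrightarrow> k \<in> Ar C \<Longrightarrow> cod C k = Mo M (Mo M X) \<Longrightarrow>
   cmp C (Ma M f) (cmp C (mult M X) k) = cmp C (mult M Y) (cmp C (Ma M (Ma M f)) k)"
  using mult_nat' by metis

lemma mult_assoc': "X \<in> Ob C \<Longrightarrow> k \<in> Ar C \<Longrightarrow> cod C k = Mo M (Mo M (Mo M X)) \<Longrightarrow>
   cmp C (mult M X) (cmp C (mult M (Mo M X)) k) = cmp C (mult M X) (cmp C (Ma M (mult M X)) k)"
  by (subst (1 2) cmp_assoc[symmetric]) (auto simp: mult_assoc)

lemma mult_unit'[simp]: "X \<in> Ob C \<Longrightarrow> k \<in> Ar C \<Longrightarrow> cod C k = Mo M X \<Longrightarrow> cmp C (mult M X) (cmp C (unit M (Mo M X)) k) = k"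
  by (subst cmp_assoc[symmetric]) auto
lemma mult_Munit'[simp]: "X \<in> Ob C \<Longrightarrow> k \<in> Ar C \<Longrightarrow> cod C k = Mo M X \<Longrightarrow> cmp C (mult M X) (cmp C (Ma M (unit M X)) k) = k"
  by (subst cmp_assoc[symmetric]) auto

lemma eps_ar[simp]: "X \<in> Ob C \<Longrightarrow> sf_eps C M X \<in> Ar C"
  and dom_eps[simp]: "X \<in> Ob C \<Longrightarrow> dom C (sf_eps C M X) = cp C X (Mo M X)"
  and cod_eps[simp]: "X \<in> Ob C \<Longrightarrow> cod C (sf_eps C M X) = Mo M X"
  and eps_inl[simp]: "X \<in> Ob C \<Longrightarrow> cmp C (sf_eps C M X) (inl C X (Mo M X)) = unit M X"
  and eps_inr[simp]: "X \<in> Ob C \<Longrightarrow> cmp C (sf_eps C M X) (inr C X (Mo M X)) = idt C (Mo M X)"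
  unfolding sf_eps_def by auto

lemma eps_inl'[simp]: "X \<in> Ob C \<Longrightarrow> k \<in> Ar C \<Longrightarrow> cod C k = X \<Longrightarrow> cmp C (sf_eps C M X) (cmp C (inl C X (Mo M X)) k) = cmp C (unit M X) k"
  and eps_inr'[simp]: "X \<in> Ob C \<Longrightarrow> k \<in> Ar C \<Longrightarrow> cod C k = Mo M X \<Longrightarrow> cmp C (sf_eps C M X) (cmp C (inr C X (Mo M X)) k) = k"
  unfolding sf_eps_def by auto

lemma sf_simps[simp]:
  "Mo (semifree C M) X = cp C X (Mo M X)"
  "Ma (semifree C M) f = asum C f (Ma M f)"
  "unit (semifree C M) X = inl C X (Mo M X)"
  "mult (semifree C M) X = copair C (idt C (cp C X (Mo M X)))
                  (cmp C (inr C X (Mo M X)) (cmp C (mult M X) (Ma M (sf_eps C M X))))"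
  unfolding semifree_def sf_eps_def by auto

lemma eps_nat: "f \<in> Ar C \<Longrightarrow> cmp C (sf_eps C M (cod C f)) (asum C f (Ma M f)) = cmp C (Ma M f) (sf_eps C M (dom C f))"
  by (rule cp_ext[of _ _ "dom C f" "Mo M (dom C f)"]) (auto simp: unit_nat)

lemma eps_mult: "X \<in> Ob C \<Longrightarrow> cmp C (sf_eps C M X) (mult (semifree C M) X)
   = cmp C (mult M X) (cmp C (Ma M (sf_eps C M X)) (sf_eps C M (cp C X (Mo M X))))"
  apply (rule cp_ext[of _ _ "cp C X (Mo M X)" "Mo M (cp C X (Mo M X))"])
  apply (auto simp: unit_nat')
  done

lemma sf_endo: "endofunctor C (Mo (semifree C M)) (Ma (semifree C M))"
  unfolding endofunctor_def hom_def by auto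

lemma sf_unit_nat: "nat_trans C id id (Mo (semifree C M)) (Ma (semifree C M)) (unit (semifree C M))"
  unfolding nat_trans_def hom_def by auto

lemma sf_mult_nat: "nat_trans C (Mo (semifree C M) \<circ> Mo (semifree C M)) (Ma (semifree C M) \<circ> Ma (semifree C M))
   (Mo (semifree C M)) (Ma (semifree C M)) (mult (semifree C M))"
  unfolding nat_trans_def
proof (intro conjI ballI)
  fix X assume "X \<in> Ob C"
  then show "mult (semifree C M) X \<in> hom C ((Mo (semifree C M) \<circ> Mo (semifree C M)) X) (Mo (semifree C M) X)"
    unfolding hom_def by auto
next
  fix f assume f: "f \<in> Ar C"
  have e: "cmp C (Ma M (sf_eps C M (cod C f))) (Ma M (copair C (cmp C (inl C (cod C f) (Mo M (cod C f))) f)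
              (cmp C (inr C (cod C f) (Mo M (cod C f))) (Ma M f)))) = cmp C (Ma M (Ma M f)) (Ma M (sf_eps C M (dom C f)))"
  proof -
    have "Ma M (cmp C (sf_eps C M (cod C f)) (asum C f (Ma M f))) = Ma M (cmp C (Ma M f) (sf_eps C M (dom C f)))"
      using eps_nat[OF f] by simp
    then show ?thesis using f by (subst (asm) (1 2) ma_cmp) auto
  qed
  show "cmp C (mult (semifree C M) (cod C f)) ((Ma (semifree C M) \<circ> Ma (semifree C M)) f) =
         cmp C (Ma (semifree C M) f) (mult (semifree C M) (dom C f))"
    apply (rule cp_ext[of _ _ "cp C (dom C f) (Mo M (dom C f))" "Mo M (cp C (dom C f) (Mo M (dom C f)))"])
    using f apply (auto simp: e mult_nat')
    done
qed

lemma Meps_inl[simp]: "X \<in> Ob C \<Longrightarrow> cmp C (Ma M (sf_eps C M X)) (Ma M (inl C X (Mo M X))) = Ma M (unit M X)"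
  by (subst ma_cmp[symmetric]) auto

lemma Meps_inl'[simp]: "X \<in> Ob C \<Longrightarrow> k \<in> Ar C \<Longrightarrow> cod C k = Mo M X \<Longrightarrow>
   cmp C (Ma M (sf_eps C M X)) (cmp C (Ma M (inl C X (Mo M X))) k) = cmp C (Ma M (unit M X)) k"
  by (subst cmp_assoc[symmetric]) auto

lemma sf_monad: "is_monad C (semifree C M)"
  unfolding is_monad_def
proof (intro conjI ballI sf_endo sf_unit_nat sf_mult_nat)
  fix X assume X: "X \<in> Ob C"
  show "cmp C (mult (semifree C M) X) (unit (semifree C M) (Mo (semifree C M) X)) = idt C (Mo (semifree C M) X)"
    using X by auto
  show "cmp C (mult (semifree C M) X) (Ma (semifree C M) (unit (semifree C M) X)) = idt C (Mo (semifree C M) X)"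
    using X by auto
  have h1: "cmp C (Ma M (sf_eps C M X)) (Ma M (mult (semifree C M) X)) =
     cmp C (Ma M (mult M X)) (cmp C (Ma M (Ma M (sf_eps C M X))) (Ma M (sf_eps C M (cp C X (Mo M X)))))"
  proof -
    have t: "mult (semifree C M) X \<in> Ar C" "dom C (mult (semifree C M) X) = cp C (cp C X (Mo M X)) (Mo M (cp C X (Mo M X)))"
      "cod C (mult (semifree C M) X) = cp C X (Mo M X)" using X by auto
    have "Ma M (cmp C (sf_eps C M X) (mult (semifree C M) X)) =
     Ma M (cmp C (mult M X) (cmp C (Ma M (sf_eps C M X)) (sf_eps C M (cp C X (Mo M X)))))"
      by (rule arg_cong[OF eps_mult[OF X]])
    then show ?thesis using X t by (simp del: sf_simps)
  qed
  show "cmp C (mult (semifree C M) X) (mult (semifree C M) (Mo (semifree C M) X)) =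
        cmp C (mult (semifree C M) X) (Ma (semifree C M) (mult (semifree C M) X))"
    apply (rule cp_ext[of _ _ "cp C (cp C X (Mo M X)) (Mo M (cp C X (Mo M X)))" "Mo M (cp C (cp C X (Mo M X)) (Mo M (cp C X (Mo M X))))"])
    using X apply (auto simp: h1[unfolded sf_simps] mult_nat_rev mult_assoc')
    done
qed

end
end


context cc begin

declare sf_monad[simp]

lemma sfm_simp[simp]: "semifree_mor C \<sigma> X = asum C (idt C X) (\<sigma> X)"
  by (simp add: semifree_mor_def)

lemma sfd_simp[simp]: "sf_delta C M X = asum C (idt C X) (inr C X (Mo M X))"
  by (simp add: sf_delta_def)

lemma Mcomb: "\<lbrakk>is_monad C M; cmp C g f = h; f \<in> Ar C; g \<in> Ar C; cod C f = dom C g\<rbrakk> \<Longrightarrow> cmp C (Ma M g) (Ma M f) = Ma M h"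
  by (subst ma_cmp[symmetric]) auto

context fixes M T \<sigma> assumes mM: "is_monad C M" and mT: "is_monad C T" and ms: "monad_mor C M T \<sigma>"
begin

lemma sig_ar[simp]: "X \<in> Ob C \<Longrightarrow> \<sigma> X \<in> Ar C"
  and dom_sig[simp]: "X \<in> Ob C \<Longrightarrow> dom C (\<sigma> X) = Mo M X"
  and cod_sig[simp]: "X \<in> Ob C \<Longrightarrow> cod C (\<sigma> X) = Mo T X"
  and sig_unit[simp]: "X \<in> Ob C \<Longrightarrow> cmp C (\<sigma> X) (unit M X) = unit T X"
  using ms unfolding monad_mor_def nat_trans_def hom_def by auto

lemma sig_nat: "f \<in> Ar C \<Longrightarrow> cod C f = Y \<Longrightarrow> dom C f = X \<Longrightarrow> cmp C (\<sigma> Y) (Ma M f) = cmp C (Ma T f) (\<sigma> X)"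
  and sig_mult: "X \<in> Ob C \<Longrightarrow> cmp C (\<sigma> X) (mult M X) = cmp C (mult T X) (cmp C (Ma T (\<sigma> X)) (\<sigma> (Mo M X)))"
  using ms unfolding monad_mor_def nat_trans_def by auto

lemma sig_nat': "f \<in> Ar C \<Longrightarrow> cod C f = Y \<Longrightarrow> dom C f = X \<Longrightarrow> k \<in> Ar C \<Longrightarrow> cod C k = Mo M X \<Longrightarrow>
   cmp C (\<sigma> Y) (cmp C (Ma M f) k) = cmp C (Ma T f) (cmp C (\<sigma> X) k)"
  using mM mT by (subst (1 2) cmp_assoc[symmetric]) (auto simp: sig_nat)

lemma sig_mult': "X \<in> Ob C \<Longrightarrow> k \<in> Ar C \<Longrightarrow> cod C k = Mo M (Mo M X) \<Longrightarrow>
   cmp C (\<sigma> X) (cmp C (mult M X) k) = cmp C (mult T X) (cmp C (Ma T (\<sigma> X)) (cmp C (\<sigma> (Mo M X)) k))"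
  using mM mT by (subst cmp_assoc[symmetric]) (auto simp: sig_mult)

lemma epsT_sig: "X \<in> Ob C \<Longrightarrow> cmp C (sf_eps C T X) (copair C (inl C X (Mo T X)) (cmp C (inr C X (Mo T X)) (\<sigma> X)))
   = cmp C (\<sigma> X) (sf_eps C M X)"
  by (rule cp_ext[of _ _ X "Mo M X"]) (use mM mT in auto)

lemma sfm_mor: "monad_mor C (semifree C M) (semifree C T) (semifree_mor C \<sigma>)"
  unfolding monad_mor_def nat_trans_def
proof (intro conjI ballI)
  fix X assume X: "X \<in> Ob C"
  show "semifree_mor C \<sigma> X \<in> hom C (Mo (semifree C M) X) (Mo (semifree C T) X)"
    using X mM mT unfolding hom_def by auto
  show "cmp C (semifree_mor C \<sigma> X) (unit (semifree C M) X) = unit (semifree C T) X"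
    using X mM mT by auto
  have h: "cmp C (Ma T (sf_eps C T X)) (Ma T (copair C (inl C X (Mo T X)) (cmp C (inr C X (Mo T X)) (\<sigma> X))))
     = cmp C (Ma T (\<sigma> X)) (Ma T (sf_eps C M X))"
    using X mM mT epsT_sig[OF X] by (subst (1 2) Mcomb[of T]) auto
  show "cmp C (semifree_mor C \<sigma> X) (mult (semifree C M) X) =
          cmp C (mult (semifree C T) X) (cmp C (Ma (semifree C T) (semifree_mor C \<sigma> X)) (semifree_mor C \<sigma> (Mo (semifree C M) X)))"
    apply (rule cp_ext[of _ _ "cp C X (Mo M X)" "Mo M (cp C X (Mo M X))"])
    using X mM mT apply (auto simp: sig_mult' sig_nat' sig_nat kvar[OF h])
    done
next
  fix f assume f: "f \<in> Ar C"
  show "cmp C (semifree_mor C \<sigma> (cod C f)) (Ma (semifree C M) f) = cmp C (Ma (semifree C T) f) (semifree_mor C \<sigma> (dom C f))"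
    apply (rule cp_ext[of _ _ "dom C f" "Mo M (dom C f)"])
    using f mM mT apply (auto simp: sig_nat' sig_nat)
    done
qed

end

context fixes M assumes mM: "is_monad C M"
begin

lemma eps_mor: "monad_mor C (semifree C M) M (sf_eps C M)"
  unfolding monad_mor_def nat_trans_def
proof (intro conjI ballI)
  fix X assume X: "X \<in> Ob C"
  show "sf_eps C M X \<in> hom C (Mo (semifree C M) X) (Mo M X)"
    using X mM unfolding hom_def by auto
  show "cmp C (sf_eps C M X) (unit (semifree C M) X) = unit M X" using X mM by auto
  show "cmp C (sf_eps C M X) (mult (semifree C M) X) =
        cmp C (mult M X) (cmp C (Ma M (sf_eps C M X)) (sf_eps C M (Mo (semifree C M) X)))"
    using eps_mult[OF mM X] mM by simp
next
  fix f assume f: "f \<in> Ar C"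
  show "cmp C (sf_eps C M (cod C f)) (Ma (semifree C M) f) = cmp C (Ma M f) (sf_eps C M (dom C f))"
    using eps_nat[OF mM f] mM by simp
qed

lemma epsS[simp]: "sf_eps C (semifree C M) X = copair C (inl C X (Mo M X)) (idt C (cp C X (Mo M X)))"
  by (simp add: sf_eps_def semifree_def)

lemma delta_mor: "monad_mor C (semifree C M) (semifree C (semifree C M)) (sf_delta C M)"
  unfolding monad_mor_def nat_trans_def
proof (intro conjI ballI)
  fix X assume X: "X \<in> Ob C"
  show "sf_delta C M X \<in> hom C (Mo (semifree C M) X) (Mo (semifree C (semifree C M)) X)"
    using X mM unfolding hom_def by auto
  show "cmp C (sf_delta C M X) (unit (semifree C M) X) = unit (semifree C (semifree C M)) X" using X mM by auto
  have h: "cmp C (Ma M (copair C (inl C X (Mo M X)) (idt C (cp C X (Mo M X))))) (Ma M (copair C (inl C X (cp C X (Mo M X))) (cmp C (inr C X (cp C X (Mo M X))) (inr C X (Mo M X)))))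
     = idt C (Mo M (cp C X (Mo M X)))"
    using X mM by (subst Mcomb[of M]) auto
  show "cmp C (sf_delta C M X) (mult (semifree C M) X) =
          cmp C (mult (semifree C (semifree C M)) X) (cmp C (Ma (semifree C (semifree C M)) (sf_delta C M X)) (sf_delta C M (Mo (semifree C M) X)))"
    apply (rule cp_ext[of _ _ "cp C X (Mo M X)" "Mo M (cp C X (Mo M X))"])
    using X mM apply (auto simp: h)
    done
next
  fix f assume f: "f \<in> Ar C"
  show "cmp C (sf_delta C M (cod C f)) (Ma (semifree C M) f) = cmp C (Ma (semifree C (semifree C M)) f) (sf_delta C M (dom C f))"
    apply (rule cp_ext[of _ _ "dom C f" "Mo M (dom C f)"])
    using f mM apply auto
    done
qed

end
end
context cc begin

lemma mor_facts: "is_monad C M \<Longrightarrow> is_monad C T \<Longrightarrow> monad_mor C M T \<sigma> \<Longrightarrow>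
  \<forall>X\<in>Ob C. \<sigma> X \<in> Ar C \<and> dom C (\<sigma> X) = Mo M X \<and> cod C (\<sigma> X) = Mo T X"
  by auto

lemma main: "mon_comonad C (semifree C) (semifree_mor C) (sf_eps C) (sf_delta C)"
  unfolding mon_comonad_def mon_endofunctor_def mor_eq_def mon_id_def mon_comp_def
proof (intro conjI allI impI ballI)
  fix M assume mM: "is_monad C M"
  show "is_monad C (semifree C M)" using mM by simp
  show "monad_mor C (semifree C M) M (sf_eps C M)" using eps_mor[OF mM] .
  show "monad_mor C (semifree C M) (semifree C (semifree C M)) (sf_delta C M)" using delta_mor[OF mM] .
  fix X assume X: "X \<in> Ob C"
  show "semifree_mor C (\<lambda>X. idt C (Mo M X)) X = idt C (Mo (semifree C M) X)" using mM X by simp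
  show "cmp C (sf_eps C (semifree C M) X) (sf_delta C M X) = idt C (Mo (semifree C M) X)"
    by (rule cp_ext[of _ _ X "Mo M X"]) (use mM X in auto)
  show "cmp C (semifree_mor C (sf_eps C M) X) (sf_delta C M X) = idt C (Mo (semifree C M) X)"
    by (rule cp_ext[of _ _ X "Mo M X"]) (use mM X in auto)
  show "cmp C (sf_delta C (semifree C M) X) (sf_delta C M X) = cmp C (semifree_mor C (sf_delta C M) X) (sf_delta C M X)"
    by (rule cp_ext[of _ _ X "Mo M X"]) (use mM X in auto)
next
  fix M T \<sigma> assume mM: "is_monad C M" and mT: "is_monad C T" and ms: "monad_mor C M T \<sigma>"
  show "monad_mor C (semifree C M) (semifree C T) (semifree_mor C \<sigma>)" using sfm_mor[OF mM mT ms] .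
  fix X assume X: "X \<in> Ob C"
  have s: "\<sigma> X \<in> Ar C" "dom C (\<sigma> X) = Mo M X" "cod C (\<sigma> X) = Mo T X" using mor_facts[OF mM mT ms] X by auto
  show "cmp C (\<sigma> X) (sf_eps C M X) = cmp C (sf_eps C T X) (semifree_mor C \<sigma> X)"
    by (rule cp_ext[of _ _ X "Mo M X"]) (use mM mT X s sig_unit[OF mM mT ms] in auto)
  show "cmp C (semifree_mor C (semifree_mor C \<sigma>) X) (sf_delta C M X) = cmp C (sf_delta C T X) (semifree_mor C \<sigma> X)"
    by (rule cp_ext[of _ _ X "Mo M X"]) (use mM mT X s in auto)
next
  fix M T U \<sigma> \<tau> assume mM: "is_monad C M" and mT: "is_monad C T" and mU: "is_monad C U"
    and ms: "monad_mor C M T \<sigma>" and mt: "monad_mor C T U \<tau>"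
  fix X assume X: "X \<in> Ob C"
  have s: "\<sigma> X \<in> Ar C" "dom C (\<sigma> X) = Mo M X" "cod C (\<sigma> X) = Mo T X" using mor_facts[OF mM mT ms] X by auto
  have t: "\<tau> X \<in> Ar C" "dom C (\<tau> X) = Mo T X" "cod C (\<tau> X) = Mo U X" using mor_facts[OF mT mU mt] X by auto
  show "semifree_mor C (\<lambda>X. cmp C (\<tau> X) (\<sigma> X)) X = cmp C (semifree_mor C \<tau> X) (semifree_mor C \<sigma> X)"
    by (rule cp_ext[of _ _ X "Mo M X"]) (use mM mT mU X s t in auto)
qed

end

theorem lemma19:
  assumes "category C" and "has_finite_coproducts C"
  shows "mon_comonad C (semifree C) (semifree_mor C) (sf_eps C) (sf_delta C)"
  using cc.main[of C] assms unfolding cc_def by blast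

end
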